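(* The kernel of the $\mathbb Z[\Gamma^2]$-module morphism $\Theta_2:\mathbb Z[\Gamma^2]\to H_1(P_2)$, $g\mapsto g.\partial T_2$, is the left ideal $\mathcal J_2:=I_H\cap I_V\cap I_D$. Its image $H_1(P_2)^0$ is the subgroup generated by the classes of $\delta_2[(a,ga),(a,gb),(b,gb)]$ for $a,b\in\mathbb P^1(\mathbb Q)$ and $g\in\Gamma$.
   Context: $\Gamma=PSL_2(\mathbb Z)$ acting on $P_1=\mathbb P^1(\mathbb Q)$; $P_2=P_1^2$ with diagonal $\Gamma^2$-action. $\mathbb Z[P_2^{m+1}]$ is the free abelian group on $(m+1)$-tuples of points of $P_2$; $\delta_1[x_0,x_1]=[x_1]-[x_0]$, $\delta_2[x_0,x_1,x_2]=[x_1,x_2]-[x_0,x_2]+[x_0,x_1]$; $\mathbb Z[P_2^2]^0=\ker\delta_1$, and similarly $\mathbb Z[P_1^2]^0\subset\mathbb Z[P_1^2]$. For $g\in\Gamma$ define maps $P_1\to P_2$: $\varphi_0^g(z)=(g\infty,z)$, $\varphi_1^g(z)=(z,gz)$, $\varphi_2^g(z)=(z,g0)$, extended to $\mathbb Z[P_1^2]\to\mathbb Z[P_2^2]$ by $[z_0,z_1]\mapsto[\varphi(z_0),\varphi(z_1)]$. Set $H_1(P_2)=\mathbb Z[P_2^2]^0/\sum_{j=0}^2\sum_{g\in\Gamma}\varphi_j^g(\mathbb Z[P_1^2]^0)$; $\Gamma^2$ acts diagonally and the action descends. $\partial T_2$ is the class of $\delta_2[(\infty,\infty),(0,\infty),(0,0)]$.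 Let $S=\pm\begin{pmatrix}0&-1\\1&0\end{pmatrix}$, $T=\pm\begin{pmatrix}1&1\\0&1\end{pmatrix}$, $U=\pm\begin{pmatrix}0&1\\-1&1\end{pmatrix}$, $\Gamma_\infty=\{T^n\}$, $\Gamma_0=\{(US)^n\}$, and for $\gamma\in\Gamma$, $\partial\gamma=[\gamma\infty]-[\gamma0]\in\mathbb Z[P_1]$. For $\sum_i\lambda_i(\alpha_i,\beta_i)\in\mathbb Z[\Gamma^2]$ with distinct pairs: it lies in $I_H$ iff $\sum_{i:\beta_i\in C}\lambda_i\partial\alpha_i=0$ for all $C\in\Gamma/\Gamma_\infty$; in $I_V$ iff $\sum_{i:\alpha_i\in C}\lambda_i\partial\beta_i=0$ for all $C\in\Gamma/\Gamma_0$; in $I_D$ iff $\sum_{i:\beta_i\alpha_i^{-1}=g}\lambda_i\partial\alpha_i=0$ for all $g\in\Gamma$. *)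

theory Defs
  imports Complex_Main "HOL-Library.Poly_Mapping"
begin

text \<open>Integer 2x2 matrices (a,b,c,d) = [[a,b],[c,d]]. An element of PSL_2(Z) is
  represented by its unique representative of determinant 1 with
  c > 0, or c = 0 and d > 0 (the sign class of the matrix).\<close>

type_synonym imat = "int \<times> int \<times> int \<times> int"

definition psl_normal :: "imat \<Rightarrow> bool" where
  "psl_normal m = (case m of (a,b,c,d) \<Rightarrow> a*d - b*c = 1 \<and> (c > 0 \<or> (c = 0 \<and> d > 0)))"

definition psl_norm :: "imat \<Rightarrow> imat" where
  "psl_norm m = (case m of (a,b,c,d) \<Rightarrow>
     if c > 0 \<or> (c = 0 \<and> d > 0) then (a,b,c,d) else (-a,-b,-c,-d))"

typedef psl2 = "{m. psl_normal m}"
  by (rule exI[of _ "(1,0,0,1)"]) (simp add: psl_normal_def)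

definition imat_mult :: "imat \<Rightarrow> imat \<Rightarrow> imat" where
  "imat_mult m n = (case m of (a,b,c,d) \<Rightarrow> case n of (e,f,g,h) \<Rightarrow>
     (a*e + b*g, a*f + b*h, c*e + d*g, c*f + d*h))"

text \<open>The class of the integer matrix m (assumed of determinant 1) in PSL_2(Z).\<close>
definition psl_of :: "imat \<Rightarrow> psl2" where
  "psl_of m = Abs_psl2 (psl_norm m)"

definition psl_mult :: "psl2 \<Rightarrow> psl2 \<Rightarrow> psl2" (infixl "\<cdot>\<^sub>\<Gamma>" 70) where
  "g \<cdot>\<^sub>\<Gamma> h = psl_of (imat_mult (Rep_psl2 g) (Rep_psl2 h))"

definition psl_one :: psl2 where
  "psl_one = psl_of (1,0,0,1)"

definition psl_inv :: "psl2 \<Rightarrow> psl2" where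
  "psl_inv g = (case Rep_psl2 g of (a,b,c,d) \<Rightarrow> psl_of (d,-b,-c,a))"

fun psl_npow :: "psl2 \<Rightarrow> nat \<Rightarrow> psl2" where
  "psl_npow g 0 = psl_one"
| "psl_npow g (Suc n) = g \<cdot>\<^sub>\<Gamma> psl_npow g n"

definition psl_zpow :: "psl2 \<Rightarrow> int \<Rightarrow> psl2" where
  "psl_zpow g n = (if n \<ge> 0 then psl_npow g (nat n) else psl_npow (psl_inv g) (nat (-n)))"

definition S_mat :: psl2 where "S_mat = psl_of (0,-1,1,0)"
definition T_mat :: psl2 where "T_mat = psl_of (1,1,0,1)"
definition U_mat :: psl2 where "U_mat = psl_of (0,1,-1,1)"

definition Gamma_inf :: "psl2 set" where
  "Gamma_inf = {psl_zpow T_mat n | n. True}"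
definition Gamma_0 :: "psl2 set" where
  "Gamma_0 = {psl_zpow (U_mat \<cdot>\<^sub>\<Gamma> S_mat) n | n. True}"

text \<open>Left coset g H; the elements of Gamma/H are exactly the sets lcoset g H.\<close>
definition lcoset :: "psl2 \<Rightarrow> psl2 set \<Rightarrow> psl2 set" where
  "lcoset g H = {g \<cdot>\<^sub>\<Gamma> h | h. h \<in> H}"

text \<open>P^1(Q) = Q \<union> {\<infinity>}, with None = \<infinity>.\<close>
type_synonym P1 = "rat option"
type_synonym P2 = "P1 \<times> P1"

definition infty :: P1 where "infty = None"

text \<open>Moebius action z \<mapsto> (az+b)/(cz+d); independent of the sign of the matrix.\<close>
definition act :: "psl2 \<Rightarrow> P1 \<Rightarrow> P1" where
  "act g z = (case Rep_psl2 g of (a,b,c,d) \<Rightarrow>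
     (case z of
        None \<Rightarrow> (if c = 0 then None else Some (of_int a / of_int c))
      | Some x \<Rightarrow> (if of_int c * x + of_int d = 0 then None
                   else Some ((of_int a * x + of_int b) / (of_int c * x + of_int d)))))"

text \<open>Z[X] is the free abelian group of finitely supported int-valued functions on X; [x] = frag_of x.\<close>

definition delta1 :: "(('a \<times> 'a) \<Rightarrow>\<^sub>0 int) \<Rightarrow> ('a \<Rightarrow>\<^sub>0 int)" where
  "delta1 = frag_extend (\<lambda>(x0,x1). frag_of x1 - frag_of x0)"

definition delta2 :: "(('a \<times> 'a \<times> 'a) \<Rightarrow>\<^sub>0 int) \<Rightarrow> (('a \<times> 'a) \<Rightarrow>\<^sub>0 int)" where
  "delta2 = frag_extend (\<lambda>(x0,x1,x2). frag_of (x1,x2) - frag_of (x0,x2) + frag_of (x0,x1))"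

definition cycles0 :: "((('a \<times> 'a) \<Rightarrow>\<^sub>0 int)) set" where
  "cycles0 = {c. delta1 c = 0}"

definition push2 :: "('a \<Rightarrow> 'b) \<Rightarrow> (('a \<times> 'a) \<Rightarrow>\<^sub>0 int) \<Rightarrow> (('b \<times> 'b) \<Rightarrow>\<^sub>0 int)" where
  "push2 f = frag_extend (\<lambda>(z0,z1). frag_of (f z0, f z1))"

definition phi :: "nat \<Rightarrow> psl2 \<Rightarrow> P1 \<Rightarrow> P2" where
  "phi j g z = (if j = 0 then (act g infty, z)
                else if j = 1 then (z, act g z)
                else (z, act g (Some 0)))"

inductive_set zspan :: "'a::ab_group_add set \<Rightarrow> 'a set" for A where
  zspan_zero: "0 \<in> zspan A"
| zspan_gen: "a \<in> A \<Longrightarrow> a \<in> zspan A"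
| zspan_diff: "x \<in> zspan A \<Longrightarrow> y \<in> zspan A \<Longrightarrow> x - y \<in> zspan A"

definition Bsub :: "(((P2 \<times> P2) \<Rightarrow>\<^sub>0 int)) set" where
  "Bsub = zspan (\<Union>j\<in>{0,1,2}. \<Union>g. push2 (phi j g) ` cycles0)"

text \<open>The class in H_1(P_2) = Z[P_2^2]^0 / Bsub of a cycle c, as a coset.\<close>
definition H1cls :: "((P2 \<times> P2) \<Rightarrow>\<^sub>0 int) \<Rightarrow> (((P2 \<times> P2) \<Rightarrow>\<^sub>0 int)) set" where
  "H1cls c = {c + b | b. b \<in> Bsub}"

definition actP2 :: "psl2 \<times> psl2 \<Rightarrow> P2 \<Rightarrow> P2" where
  "actP2 gh p = (act (fst gh) (fst p), act (snd gh) (snd p))"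

definition actC :: "psl2 \<times> psl2 \<Rightarrow> ((P2 \<times> P2) \<Rightarrow>\<^sub>0 int) \<Rightarrow> ((P2 \<times> P2) \<Rightarrow>\<^sub>0 int)" where
  "actC gh = push2 (actP2 gh)"

definition dT2 :: "((P2 \<times> P2) \<Rightarrow>\<^sub>0 int)" where
  "dT2 = delta2 (frag_of ((infty,infty), (Some 0,infty), (Some 0,Some 0)))"

text \<open>Theta_2 : Z[Gamma^2] \<rightarrow> H_1(P_2), g \<mapsto> g.dT2 (on representatives).\<close>
definition Theta2 :: "((psl2 \<times> psl2) \<Rightarrow>\<^sub>0 int) \<Rightarrow> ((P2 \<times> P2) \<Rightarrow>\<^sub>0 int)" where
  "Theta2 = frag_extend (\<lambda>gh. actC gh dT2)"

definition bdG :: "psl2 \<Rightarrow> (P1 \<Rightarrow>\<^sub>0 int)" where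
  "bdG g = frag_of (act g infty) - frag_of (act g (Some 0))"

definition I_H :: "(((psl2 \<times> psl2) \<Rightarrow>\<^sub>0 int)) set" where
  "I_H = {x. \<forall>C \<in> {lcoset g Gamma_inf | g. True}.
            frag_extend (\<lambda>(\<alpha>,\<beta>). if \<beta> \<in> C then bdG \<alpha> else 0) x = 0}"

definition I_V :: "(((psl2 \<times> psl2) \<Rightarrow>\<^sub>0 int)) set" where
  "I_V = {x. \<forall>C \<in> {lcoset g Gamma_0 | g. True}.
            frag_extend (\<lambda>(\<alpha>,\<beta>). if \<alpha> \<in> C then bdG \<beta> else 0) x = 0}"

definition I_D :: "(((psl2 \<times> psl2) \<Rightarrow>\<^sub>0 int)) set" where
  "I_D = {x. \<forall>g. frag_extend (\<lambda>(\<alpha>,\<beta>). if \<beta> \<cdot>\<^sub>\<Gamma> psl_inv \<alpha> = g then bdG \<alpha> else 0) x = 0}"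

definition J2 :: "(((psl2 \<times> psl2) \<Rightarrow>\<^sub>0 int)) set" where
  "J2 = I_H \<inter> I_V \<inter> I_D"

definition H1gens :: "(((P2 \<times> P2) \<Rightarrow>\<^sub>0 int)) set" where
  "H1gens = {delta2 (frag_of ((a, act g a), (a, act g b), (b, act g b))) | a b g. True}"

end

theory Submission
  imports Defs
begin


definition mdet :: "imat \<Rightarrow> int" where
  "mdet m = (case m of (a,b,c,d) \<Rightarrow> a*d - b*c)"
definition mneg :: "imat \<Rightarrow> imat" where
  "mneg m = (case m of (a,b,c,d) \<Rightarrow> (-a,-b,-c,-d))"

lemma psl_normal_norm: assumes "mdet m = 1" shows "psl_normal (psl_norm m)"
proof -
  obtain a b c d where m: "m = (a,b,c,d)" by (cases m) auto
  have "a*d - b*c = 1" using assms by (simp add: m mdet_def)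
  moreover have "c = 0 \<Longrightarrow> d \<noteq> 0" using calculation by auto
  ultimately show ?thesis unfolding m psl_normal_def psl_norm_def by auto
qed

lemma Rep_psl_of: "mdet m = 1 \<Longrightarrow> Rep_psl2 (psl_of m) = psl_norm m"
  unfolding psl_of_def by (rule Abs_psl2_inverse) (simp add: psl_normal_norm)

lemma psl_norm_cases: "psl_norm m = m \<or> psl_norm m = mneg m"
  by (cases m) (auto simp: psl_norm_def mneg_def)

lemma Rep_normal: "psl_normal (Rep_psl2 g)"
  using Rep_psl2 by auto

lemma mdet_Rep: "mdet (Rep_psl2 g) = 1"
  using Rep_normal[of g] by (cases "Rep_psl2 g") (auto simp: psl_normal_def mdet_def)

lemma psl_norm_normal: "psl_normal m \<Longrightarrow> psl_norm m = m"
  by (cases m) (auto simp: psl_normal_def psl_norm_def)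

lemma psl_of_Rep [simp]: "psl_of (Rep_psl2 g) = g"
  by (simp add: psl_of_def psl_norm_normal[OF Rep_normal] Rep_psl2_inverse)

lemma mdet_mneg [simp]: "mdet (mneg m) = mdet m"
  by (cases m) (auto simp: mdet_def mneg_def)

lemma psl_norm_mneg: "mdet m = 1 \<Longrightarrow> psl_norm (mneg m) = psl_norm m"
  by (cases m) (auto simp: psl_norm_def mneg_def mdet_def)

lemma psl_of_mneg: "mdet m = 1 \<Longrightarrow> psl_of (mneg m) = psl_of m"
  by (simp add: psl_of_def psl_norm_mneg)

lemma mdet_mult: "mdet (imat_mult m n) = mdet m * mdet n"
  by (cases m; cases n) (simp add: mdet_def imat_mult_def algebra_simps)

lemma mult_mneg1: "imat_mult (mneg m) n = mneg (imat_mult m n)"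
  by (cases m; cases n) (simp add: mneg_def imat_mult_def algebra_simps)
lemma mult_mneg2: "imat_mult m (mneg n) = mneg (imat_mult m n)"
  by (cases m; cases n) (simp add: mneg_def imat_mult_def algebra_simps)

lemma imat_assoc: "imat_mult (imat_mult m n) k = imat_mult m (imat_mult n k)"
  by (cases m; cases n; cases k) (simp add: imat_mult_def algebra_simps)

lemma Rep_psl_of_cases: "mdet m = 1 \<Longrightarrow> Rep_psl2 (psl_of m) = m \<or> Rep_psl2 (psl_of m) = mneg m"
  using Rep_psl_of psl_norm_cases by metis

lemma psl_of_mult: assumes "mdet m = 1" "mdet n = 1"
  shows "psl_of m \<cdot>\<^sub>\<Gamma> psl_of n = psl_of (imat_mult m n)"
proof -
  have d: "mdet (imat_mult m n) = 1" using assms by (simp add: mdet_mult)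
  show ?thesis unfolding psl_mult_def
    using Rep_psl_of_cases[OF assms(1)] Rep_psl_of_cases[OF assms(2)]
    by (auto simp: mult_mneg1 mult_mneg2 psl_of_mneg d)
qed

lemma psl_of_eq_Rep: "g = psl_of (Rep_psl2 g)" by simp

lemma mult_psl_of_r: "mdet m = 1 \<Longrightarrow> psl_of m \<cdot>\<^sub>\<Gamma> k = psl_of (imat_mult m (Rep_psl2 k))"
  using psl_of_mult[of m "Rep_psl2 k"] by (simp add: mdet_Rep)
lemma mult_psl_of_l: "mdet m = 1 \<Longrightarrow> g \<cdot>\<^sub>\<Gamma> psl_of m = psl_of (imat_mult (Rep_psl2 g) m)"
  using psl_of_mult[of "Rep_psl2 g" m] by (simp add: mdet_Rep)

lemma psl_assoc: "(g \<cdot>\<^sub>\<Gamma> h) \<cdot>\<^sub>\<Gamma> k = g \<cdot>\<^sub>\<Gamma> (h \<cdot>\<^sub>\<Gamma> k)"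
proof -
  have d1: "mdet (imat_mult (Rep_psl2 g) (Rep_psl2 h)) = 1" by (simp add: mdet_mult mdet_Rep)
  have d2: "mdet (imat_mult (Rep_psl2 h) (Rep_psl2 k)) = 1" by (simp add: mdet_mult mdet_Rep)
  have "(g \<cdot>\<^sub>\<Gamma> h) \<cdot>\<^sub>\<Gamma> k = psl_of (imat_mult (imat_mult (Rep_psl2 g) (Rep_psl2 h)) (Rep_psl2 k))"
    unfolding psl_mult_def[of g h] by (rule mult_psl_of_r[OF d1])
  moreover have "g \<cdot>\<^sub>\<Gamma> (h \<cdot>\<^sub>\<Gamma> k) = psl_of (imat_mult (Rep_psl2 g) (imat_mult (Rep_psl2 h) (Rep_psl2 k)))"
    unfolding psl_mult_def[of h k] by (rule mult_psl_of_l[OF d2])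
  ultimately show ?thesis by (simp add: imat_assoc)
qed

lemma Rep_one: "Rep_psl2 psl_one = (1,0,0,1)"
  by (simp add: psl_one_def Rep_psl_of mdet_def psl_norm_def)

lemma psl_one_mult [simp]: "psl_one \<cdot>\<^sub>\<Gamma> g = g"
proof -
  have "imat_mult (1,0,0,1) (Rep_psl2 g) = Rep_psl2 g"
    by (cases "Rep_psl2 g") (simp add: imat_mult_def)
  then show ?thesis by (simp add: psl_mult_def Rep_one)
qed
lemma psl_mult_one [simp]: "g \<cdot>\<^sub>\<Gamma> psl_one = g"
proof -
  have "imat_mult (Rep_psl2 g) (1,0,0,1) = Rep_psl2 g"
    by (cases "Rep_psl2 g") (simp add: imat_mult_def)
  then show ?thesis by (simp add: psl_mult_def Rep_one)
qed

lemma mdet_inv: "mdet (d,-b,-c,a) = mdet (a,b,c,d)" by (simp add: mdet_def algebra_simps)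

lemma psl_inv_mult [simp]: "psl_inv g \<cdot>\<^sub>\<Gamma> g = psl_one"
proof -
  obtain a b c d where r: "Rep_psl2 g = (a,b,c,d)" by (cases "Rep_psl2 g") auto
  have d: "a*d - b*c = 1" using mdet_Rep[of g] r by (simp add: mdet_def)
  have g: "g = psl_of (a,b,c,d)" using psl_of_Rep[of g] r by simp
  have i: "psl_inv g = psl_of (d,-b,-c,a)" by (simp add: psl_inv_def r)
  have "psl_inv g \<cdot>\<^sub>\<Gamma> g = psl_of (d,-b,-c,a) \<cdot>\<^sub>\<Gamma> psl_of (a,b,c,d)"
    using g i by metis
  also have "\<dots> = psl_of (1,0,0,1)"
    using d by (subst psl_of_mult) (auto simp: mdet_def imat_mult_def algebra_simps)
  finally show ?thesis by (simp add: psl_one_def)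
qed

lemma psl_mult_inv [simp]: "g \<cdot>\<^sub>\<Gamma> psl_inv g = psl_one"
proof -
  obtain a b c d where r: "Rep_psl2 g = (a,b,c,d)" by (cases "Rep_psl2 g") auto
  have d: "a*d - b*c = 1" using mdet_Rep[of g] r by (simp add: mdet_def)
  have g: "g = psl_of (a,b,c,d)" using psl_of_Rep[of g] r by simp
  have i: "psl_inv g = psl_of (d,-b,-c,a)" by (simp add: psl_inv_def r)
  have "g \<cdot>\<^sub>\<Gamma> psl_inv g = psl_of (a,b,c,d) \<cdot>\<^sub>\<Gamma> psl_of (d,-b,-c,a)"
    using g i by metis
  also have "\<dots> = psl_of (1,0,0,1)"
    using d by (subst psl_of_mult) (auto simp: mdet_def imat_mult_def algebra_simps)
  finally show ?thesis by (simp add: psl_one_def)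
qed

lemma psl_cancel_left: assumes "g \<cdot>\<^sub>\<Gamma> h = g \<cdot>\<^sub>\<Gamma> k" shows "h = k"
proof -
  have "h = (psl_inv g \<cdot>\<^sub>\<Gamma> g) \<cdot>\<^sub>\<Gamma> h" by simp
  also have "\<dots> = psl_inv g \<cdot>\<^sub>\<Gamma> (g \<cdot>\<^sub>\<Gamma> k)" by (simp only: psl_assoc assms)
  also have "\<dots> = k" by (simp only: psl_assoc[symmetric] psl_inv_mult psl_one_mult)
  finally show ?thesis .
qed


lemma psl_inv_inv: "psl_inv (psl_inv g) = g"
proof -
  have "psl_inv (psl_inv g) = psl_inv (psl_inv g) \<cdot>\<^sub>\<Gamma> (psl_inv g \<cdot>\<^sub>\<Gamma> g)"
    apply (subst psl_inv_mult) apply (subst psl_mult_one) apply (rule refl) done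
  also have "\<dots> = (psl_inv (psl_inv g) \<cdot>\<^sub>\<Gamma> psl_inv g) \<cdot>\<^sub>\<Gamma> g"
    by (simp only: psl_assoc)
  also have "\<dots> = g" by (simp only: psl_inv_mult psl_one_mult)
  finally show ?thesis .
qed


definition actm :: "imat \<Rightarrow> P1 \<Rightarrow> P1" where
  "actm m z = (case m of (a,b,c,d) \<Rightarrow>
     (case z of
        None \<Rightarrow> (if c = 0 then None else Some (of_int a / of_int c))
      | Some x \<Rightarrow> (if of_int c * x + of_int d = 0 then None
                   else Some ((of_int a * x + of_int b) / (of_int c * x + of_int d)))))"

lemma act_actm: "act g = actm (Rep_psl2 g)"
  by (rule ext) (simp add: act_def actm_def)

definition hom :: "P1 \<Rightarrow> rat \<times> rat" where
  "hom z = (case z of None \<Rightarrow> (1,0) | Some x \<Rightarrow> (x,1))"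
definition dehom :: "rat \<times> rat \<Rightarrow> P1" where
  "dehom w = (if snd w = 0 then None else Some (fst w / snd w))"
definition mv :: "imat \<Rightarrow> rat \<times> rat \<Rightarrow> rat \<times> rat" where
  "mv m w = (case m of (a,b,c,d) \<Rightarrow> (of_int a * fst w + of_int b * snd w, of_int c * fst w + of_int d * snd w))"

lemma actm_hom: "actm m z = dehom (mv m (hom z))"
  by (cases m; cases z) (auto simp: actm_def dehom_def mv_def hom_def)

lemma dehom_hom [simp]: "dehom (hom z) = z"
  by (cases z) (auto simp: dehom_def hom_def)

lemma hom_nz: "hom z \<noteq> (0,0)" by (cases z) (auto simp: hom_def)

lemma hom_dehom: "w \<noteq> (0,0) \<Longrightarrow> \<exists>t. t \<noteq> 0 \<and> w = (t * fst (hom (dehom w)), t * snd (hom (dehom w)))"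
  by (cases w) (auto simp: hom_def dehom_def)

lemma dehom_scale: "t \<noteq> 0 \<Longrightarrow> dehom (t * u, t * v) = dehom (u, v)"
  by (auto simp: dehom_def)

lemma mv_scale: "mv m (t * u, t * v) = (t * fst (mv m (u,v)), t * snd (mv m (u,v)))"
  by (cases m) (simp add: mv_def algebra_simps)

lemma mv_mult: "mv (imat_mult m n) w = mv m (mv n w)"
  by (cases m; cases n; cases w) (simp add: mv_def imat_mult_def algebra_simps)

lemma mv_nz: assumes "mdet m = 1" "w \<noteq> (0,0)" shows "mv m w \<noteq> (0,0)"
proof
  assume h: "mv m w = (0,0)"
  obtain a b c d where m: "m = (a,b,c,d)" by (cases m) auto
  obtain u v where w: "w = (u,v)" by (cases w) auto
  have e1: "of_int a * u + of_int b * v = (0::rat)" "of_int c * u + of_int d * v = (0::rat)"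
    using h by (auto simp: m w mv_def)
  have dd: "of_int a * of_int d - of_int b * of_int c = (1::rat)"
    using assms(1) by (simp add: m mdet_def flip: of_int_mult of_int_diff)
  have "u = (of_int a * of_int d - of_int b * of_int c) * u" using dd by simp
  also have "\<dots> = of_int d * (of_int a * u + of_int b * v) - of_int b * (of_int c * u + of_int d * v)"
    by (simp add: algebra_simps)
  finally have "u = 0" using e1 by simp
  have "v = (of_int a * of_int d - of_int b * of_int c) * v" using dd by simp
  also have "\<dots> = of_int a * (of_int c * u + of_int d * v) - of_int c * (of_int a * u + of_int b * v)"
    by (simp add: algebra_simps)
  finally have "v = 0" using e1 by simp
  with \<open>u = 0\<close> assms(2) w show False by simp
qed

lemma actm_mult: assumes "mdet n = 1"
  shows "actm (imat_mult m n) z = actm m (actm n z)"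
proof -
  let ?w = "mv n (hom z)"
  have "?w \<noteq> (0,0)" using mv_nz[OF assms hom_nz] .
  then obtain t where t: "t \<noteq> 0" "?w = (t * fst (hom (dehom ?w)), t * snd (hom (dehom ?w)))"
    using hom_dehom by blast
  have "actm (imat_mult m n) z = dehom (mv m ?w)" by (simp add: actm_hom mv_mult)
  also have "\<dots> = dehom (mv m (t * fst (hom (dehom ?w)), t * snd (hom (dehom ?w))))"
    using t(2) by metis
  also have "\<dots> = dehom (mv m (hom (dehom ?w)))"
    by (simp add: mv_scale dehom_scale t(1))
  finally show ?thesis by (simp add: actm_hom)
qed

lemma actm_mneg: "actm (mneg m) = actm m"
  by (rule ext, cases m, simp add: actm_hom mv_def mneg_def dehom_def, auto simp: field_simps)

lemma act_psl_of: "mdet m = 1 \<Longrightarrow> act (psl_of m) = actm m"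
  using Rep_psl_of_cases[of m] by (auto simp: act_actm actm_mneg)

lemma act_mult: "act (g \<cdot>\<^sub>\<Gamma> h) z = act g (act h z)"
proof -
  have "act (g \<cdot>\<^sub>\<Gamma> h) z = actm (imat_mult (Rep_psl2 g) (Rep_psl2 h)) z"
    by (simp add: psl_mult_def act_psl_of mdet_mult mdet_Rep)
  then show ?thesis by (simp add: actm_mult mdet_Rep act_actm)
qed

lemma act_one [simp]: "act psl_one z = z"
  by (cases z) (simp_all add: act_actm Rep_one actm_def)

lemma act_inv [simp]: "act (psl_inv g) (act g z) = z"
  by (simp only: act_mult[symmetric] psl_inv_mult act_one)
lemma act_inv2 [simp]: "act g (act (psl_inv g) z) = z"
  by (simp only: act_mult[symmetric] psl_mult_inv act_one)

lemma act_inj: "act g z = act g w \<longleftrightarrow> z = w"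
proof
  assume "act g z = act g w"
  then have "act (psl_inv g) (act g z) = act (psl_inv g) (act g w)" by simp
  then show "z = w" by simp
qed simp


lemma psl_cancel_right: assumes "h \<cdot>\<^sub>\<Gamma> g = k \<cdot>\<^sub>\<Gamma> g" shows "h = k"
proof -
  have "h = h \<cdot>\<^sub>\<Gamma> (g \<cdot>\<^sub>\<Gamma> psl_inv g)" by simp
  also have "\<dots> = (k \<cdot>\<^sub>\<Gamma> g) \<cdot>\<^sub>\<Gamma> psl_inv g" by (simp only: psl_assoc[symmetric] assms)
  also have "\<dots> = k" by (simp only: psl_assoc psl_mult_inv psl_mult_one)
  finally show ?thesis .
qed

lemma psl_inv_left_one: "psl_inv g \<cdot>\<^sub>\<Gamma> h = psl_one \<Longrightarrow> h = g"
  using psl_cancel_left[of "psl_inv g" h g] by simp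

lemma mult_inv_cancel: "g \<cdot>\<^sub>\<Gamma> (psl_inv g \<cdot>\<^sub>\<Gamma> h) = h"
  by (simp only: psl_assoc[symmetric] psl_mult_inv psl_one_mult)

lemma act_psl_of_tup: "a*d - b*c = 1 \<Longrightarrow> act (psl_of (a,b,c,d)) z = actm (a,b,c,d) z"
  by (simp add: act_psl_of mdet_def)

lemma act_S_None [simp]: "act S_mat None = Some 0"
  by (simp add: S_mat_def act_psl_of_tup actm_def)
lemma act_S_0 [simp]: "act S_mat (Some 0) = None"
  by (simp add: S_mat_def act_psl_of_tup actm_def)
lemma act_S_Some: "x \<noteq> 0 \<Longrightarrow> act S_mat (Some x) = Some (-1 / x)"
  by (simp add: S_mat_def act_psl_of_tup actm_def)

definition tr :: "int \<Rightarrow> psl2" where "tr n = psl_of (1,n,0,1)"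
lemma act_tr_None [simp]: "act (tr n) None = None"
  by (simp add: tr_def act_psl_of_tup actm_def)
lemma act_tr_Some [simp]: "act (tr n) (Some x) = Some (x + of_int n)"
  by (simp add: tr_def act_psl_of_tup actm_def)

definition adj :: "P1 \<Rightarrow> P1 \<Rightarrow> bool" where
  "adj a b \<longleftrightarrow> (\<exists>\<alpha>. act \<alpha> None = a \<and> act \<alpha> (Some 0) = b)"

lemma adj_act: "adj a b \<Longrightarrow> adj (act k a) (act k b)"
  unfolding adj_def by (metis act_mult)

lemma adj_sym: "adj a b \<Longrightarrow> adj b a"
  unfolding adj_def by (metis act_mult act_S_None act_S_0)

lemma adj_inf0: "adj None (Some 0)"
  unfolding adj_def by (rule exI[of _ psl_one]) simp

lemma adjs_act: "adj\<^sup>*\<^sup>* a b \<Longrightarrow> adj\<^sup>*\<^sup>* (act k a) (act k b)"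
proof (induction rule: rtranclp_induct)
  case (step y z) then show ?case by (meson adj_act rtranclp.rtrancl_into_rtrancl)
qed simp

lemma adjs_sym: "adj\<^sup>*\<^sup>* a b \<Longrightarrow> adj\<^sup>*\<^sup>* b a"
proof (induction rule: rtranclp_induct)
  case (step y z) then show ?case by (meson adj_sym converse_rtranclp_into_rtranclp)
qed simp

lemma reach_tr: "adj\<^sup>*\<^sup>* None z \<Longrightarrow> adj\<^sup>*\<^sup>* None (act (tr n) z)"
  using adjs_act[of None z "tr n"] by simp

lemma reach_S: "adj\<^sup>*\<^sup>* None z \<Longrightarrow> adj\<^sup>*\<^sup>* None (act S_mat z)"
  using adjs_act[of None z S_mat] adj_inf0 by (simp add: converse_rtranclp_into_rtranclp)

lemma reach_frac: "adj\<^sup>*\<^sup>* None (Some (of_int p / of_int (int q)))" if "q > 0"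
  using that
proof (induction q arbitrary: p rule: less_induct)
  case (less q)
  define n where "n = p div int q"
  define r where "r = p mod int q"
  have qp: "int q > 0" using less.prems by simp
  have pr: "p = n * int q + r" by (simp add: n_def r_def)
  have r0: "0 \<le> r" "r < int q" using qp by (simp_all add: r_def)
  have z0: "adj\<^sup>*\<^sup>* None (Some 0)" using adj_inf0 by simp
  show ?case
  proof (cases "r = 0")
    case True
    have "Some (of_int p / of_int (int q)) = act (tr n) (Some 0)"
      using qp by (simp add: pr True)
    then show ?thesis using reach_tr[OF z0] by simp
  next
    case False
    then have rp: "r > 0" using r0 by simp
    have "nat r < q" using r0 by linarith
    from less.IH[OF this, of "- int q"] rp
    have "adj\<^sup>*\<^sup>* None (Some (of_int (- int q) / of_int r))" by simp
    from reach_S[OF this] have "adj\<^sup>*\<^sup>* None (Some (of_int r / of_int (int q)))"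
      using rp qp by (simp add: act_S_Some)
    from reach_tr[OF this, of n]
    show ?thesis using qp by (simp add: pr field_simps)
  qed
qed

lemma reach_all: "adj\<^sup>*\<^sup>* None z"
proof (cases z)
  case (Some x)
  obtain p q where pq: "quotient_of x = (p,q)" by (cases "quotient_of x") auto
  have q: "q > 0" using quotient_of_denom_pos[OF pq] .
  have x: "x = of_int p / of_int q" using quotient_of_div[OF pq] .
  have "adj\<^sup>*\<^sup>* None (Some (of_int p / of_int (int (nat q))))"
    using q by (intro reach_frac) simp
  then show ?thesis using q x Some by simp
qed simp

lemma adjs_all: "adj\<^sup>*\<^sup>* a b"
  using reach_all[of a] reach_all[of b] adjs_sym by (meson rtranclp_trans)

lemma trans_inf: "\<exists>g. act g None = z"
proof -
  have "adj\<^sup>*\<^sup>* None z" by (rule reach_all)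
  then show ?thesis
  proof (cases rule: rtranclp.cases)
    case rtrancl_refl then show ?thesis by (metis act_one)
  next
    case (rtrancl_into_rtrancl y)
    then obtain \<alpha> where "act \<alpha> None = y" "act \<alpha> (Some 0) = z" by (auto simp: adj_def)
    then show ?thesis by (metis act_mult act_S_None)
  qed
qed

lemma trans_0: "\<exists>g. act g (Some 0) = z"
  using trans_inf[of z] by (metis act_mult act_S_0)

lemma fix_inf_pt: assumes "act k None = None" "act k (Some x) = Some x" shows "k = psl_one"
proof -
  obtain a b c d where r: "Rep_psl2 k = (a,b,c,d)" by (cases "Rep_psl2 k") auto
  have n: "a*d - b*c = 1" "c > 0 \<or> (c = 0 \<and> d > 0)" using Rep_normal[of k] r by (auto simp: psl_normal_def)
  have c: "c = 0" using assms(1) by (simp add: act_actm r actm_def split: if_splits)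
  then have "a*d = 1" "d > 0" using n by auto
  then have ad: "a = 1" "d = 1" using zmult_eq_1_iff[of a d] by auto
  have "(x + of_int b) = x" using assms(2) by (simp add: act_actm r actm_def c ad)
  then have "b = 0" by simp
  then have "Rep_psl2 k = Rep_psl2 psl_one" by (simp add: r Rep_one c ad)
  then show ?thesis by (simp add: Rep_psl2_inject)
qed

lemma fix_two: assumes "act k z0 = z0" "act k z1 = z1" "z0 \<noteq> z1" shows "k = psl_one"
proof -
  obtain \<gamma> where g: "act \<gamma> None = z0" using trans_inf by blast
  define k' where "k' = psl_inv \<gamma> \<cdot>\<^sub>\<Gamma> (k \<cdot>\<^sub>\<Gamma> \<gamma>)"
  have "act k' None = act (psl_inv \<gamma>) (act k (act \<gamma> None))" by (simp add: k'_def act_mult)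
  also have "\<dots> = act (psl_inv \<gamma>) (act \<gamma> None)" using assms(1) g by simp
  finally have "act k' None = None" by simp
  moreover obtain w where w: "act (psl_inv \<gamma>) z1 = w" by blast
  have "w \<noteq> None" using w g assms(3) by (metis act_inv2)
  then obtain x where x: "w = Some x" by auto
  have "act k' (Some x) = Some x" using assms(2) w x by (simp add: k'_def act_mult) (metis act_inv2)
  ultimately have "k' = psl_one" using fix_inf_pt by blast
  then have "k \<cdot>\<^sub>\<Gamma> \<gamma> = \<gamma>" unfolding k'_def using psl_inv_left_one by blast
  then have "k \<cdot>\<^sub>\<Gamma> \<gamma> = psl_one \<cdot>\<^sub>\<Gamma> \<gamma>" by simp
  then show ?thesis by (rule psl_cancel_right)
qed

lemma two_point: assumes "act g z0 = act h z0" "act g z1 = act h z1" "z0 \<noteq> z1" shows "g = h"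
proof -
  have "act (psl_inv g \<cdot>\<^sub>\<Gamma> h) z0 = z0" "act (psl_inv g \<cdot>\<^sub>\<Gamma> h) z1 = z1"
    using assms by (simp_all add: act_mult) (metis act_inv)+
  then have "psl_inv g \<cdot>\<^sub>\<Gamma> h = psl_one" using fix_two assms(3) by blast
  then show ?thesis using psl_inv_left_one by blast
qed


definition lo :: "int \<Rightarrow> psl2" where "lo n = psl_of (1,0,n,1)"

lemma Rep_psl_of_norm: "psl_normal m \<Longrightarrow> Rep_psl2 (psl_of m) = m"
  by (simp add: psl_of_def psl_norm_normal Abs_psl2_inverse)

lemma Rep_T: "Rep_psl2 T_mat = (1,1,0,1)"
  by (simp add: T_mat_def Rep_psl_of_norm psl_normal_def)

lemma npow_T: "psl_npow T_mat n = tr (int n)"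
proof (induction n)
  case 0 then show ?case by (simp add: tr_def psl_one_def)
next
  case (Suc n)
  have "T_mat \<cdot>\<^sub>\<Gamma> tr (int n) = tr (int (Suc n))"
    unfolding T_mat_def tr_def by (subst psl_of_mult) (simp_all add: mdet_def imat_mult_def add.commute)
  then show ?case using Suc by simp
qed

lemma npow_Tinv: "psl_npow (psl_inv T_mat) n = tr (- int n)"
proof (induction n)
  case 0 then show ?case by (simp add: tr_def psl_one_def)
next
  case (Suc n)
  have i: "psl_inv T_mat = psl_of (1,-1,0,1)" by (simp add: psl_inv_def Rep_T)
  have "psl_inv T_mat \<cdot>\<^sub>\<Gamma> tr (- int n) = tr (- int (Suc n))"
    unfolding i tr_def by (subst psl_of_mult) (simp_all add: mdet_def imat_mult_def add.commute)
  then show ?case using Suc by simp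
qed

lemma zpow_T: "psl_zpow T_mat n = tr n"
  by (simp add: psl_zpow_def npow_T npow_Tinv)

lemma Gamma_inf_eq: "Gamma_inf = range tr"
  by (auto simp: Gamma_inf_def zpow_T)

lemma US: "U_mat \<cdot>\<^sub>\<Gamma> S_mat = lo 1"
  unfolding U_mat_def S_mat_def lo_def by (subst psl_of_mult) (simp_all add: mdet_def imat_mult_def add.commute)

lemma Rep_lo1: "Rep_psl2 (lo 1) = (1,0,1,1)"
  by (simp add: lo_def Rep_psl_of_norm psl_normal_def)

lemma npow_lo: "psl_npow (lo 1) n = lo (int n)"
proof (induction n)
  case 0 then show ?case by (simp add: lo_def psl_one_def)
next
  case (Suc n)
  have "lo 1 \<cdot>\<^sub>\<Gamma> lo (int n) = lo (int (Suc n))"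
    unfolding lo_def by (subst psl_of_mult) (simp_all add: mdet_def imat_mult_def add.commute)
  then show ?case using Suc by simp
qed

lemma npow_loinv: "psl_npow (psl_inv (lo 1)) n = lo (- int n)"
proof (induction n)
  case 0 then show ?case by (simp add: lo_def psl_one_def)
next
  case (Suc n)
  have i: "psl_inv (lo 1) = psl_of (1,0,-1,1)" by (simp add: psl_inv_def Rep_lo1)
  have "psl_inv (lo 1) \<cdot>\<^sub>\<Gamma> lo (- int n) = lo (- int (Suc n))"
    unfolding i unfolding lo_def by (subst psl_of_mult) (simp_all add: mdet_def imat_mult_def add.commute)
  then show ?case using Suc by simp
qed

lemma Gamma_0_eq: "Gamma_0 = range lo"
  by (auto simp: Gamma_0_def US psl_zpow_def npow_lo npow_loinv)

lemma act_tr: "act (tr n) None = None" by simp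

lemma act_lo_0: "act (lo n) (Some 0) = Some 0"
  by (simp add: lo_def act_psl_of_tup actm_def)

lemma stab_inf: assumes "act k None = None" shows "\<exists>n. k = tr n"
proof -
  obtain a b c d where r: "Rep_psl2 k = (a,b,c,d)" by (cases "Rep_psl2 k") auto
  have n: "a*d - b*c = 1" "c > 0 \<or> (c = 0 \<and> d > 0)" using Rep_normal[of k] r by (auto simp: psl_normal_def)
  have c: "c = 0" using assms(1) by (simp add: act_actm r actm_def split: if_splits)
  then have "a*d = 1" "d > 0" using n by auto
  then have ad: "a = 1" "d = 1" using zmult_eq_1_iff[of a d] by auto
  have "k = psl_of (Rep_psl2 k)" by simp
  then have "k = tr b" by (simp add: r c ad tr_def)
  then show ?thesis by blast
qed

lemma stab_0: assumes "act k (Some 0) = Some 0" shows "\<exists>n. k = lo n"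
proof -
  obtain a b c d where r: "Rep_psl2 k = (a,b,c,d)" by (cases "Rep_psl2 k") auto
  have n: "a*d - b*c = 1" using Rep_normal[of k] r by (auto simp: psl_normal_def)
  have dz: "d \<noteq> 0" "b = 0" using assms(1) by (auto simp: act_actm r actm_def split: if_splits)
  then have "a*d = 1" using n by auto
  then have ad: "(a = 1 \<and> d = 1) \<or> (a = -1 \<and> d = -1)" using zmult_eq_1_iff[of a d] by auto
  have k: "k = psl_of (a,b,c,d)" using psl_of_Rep[of k] r by simp
  show ?thesis
  proof (cases "a = 1")
    case True then show ?thesis using k ad dz by (auto simp: lo_def)
  next
    case False
    then have "k = psl_of (mneg (1,0,-c,1))" using k ad dz by (simp add: mneg_def)
    also have "\<dots> = lo (-c)" by (simp add: psl_of_mneg mdet_def lo_def)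
    finally show ?thesis by blast
  qed
qed

lemma lcoset_inf: "\<beta> \<in> lcoset g Gamma_inf \<longleftrightarrow> act \<beta> None = act g None"
proof
  assume "\<beta> \<in> lcoset g Gamma_inf"
  then obtain n where "\<beta> = g \<cdot>\<^sub>\<Gamma> tr n" by (auto simp: lcoset_def Gamma_inf_eq)
  then show "act \<beta> None = act g None" by (simp add: act_mult)
next
  assume h: "act \<beta> None = act g None"
  have "act (psl_inv g \<cdot>\<^sub>\<Gamma> \<beta>) None = None" by (simp add: act_mult h)
  then obtain n where "psl_inv g \<cdot>\<^sub>\<Gamma> \<beta> = tr n" using stab_inf by blast
  then have "\<beta> = g \<cdot>\<^sub>\<Gamma> tr n" using mult_inv_cancel[of g \<beta>] by simp
  then show "\<beta> \<in> lcoset g Gamma_inf" by (auto simp: lcoset_def Gamma_inf_eq)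
qed

lemma lcoset_0: "\<alpha> \<in> lcoset g Gamma_0 \<longleftrightarrow> act \<alpha> (Some 0) = act g (Some 0)"
proof
  assume "\<alpha> \<in> lcoset g Gamma_0"
  then obtain n where "\<alpha> = g \<cdot>\<^sub>\<Gamma> lo n" by (auto simp: lcoset_def Gamma_0_eq)
  then show "act \<alpha> (Some 0) = act g (Some 0)" by (simp add: act_mult act_lo_0)
next
  assume h: "act \<alpha> (Some 0) = act g (Some 0)"
  have "act (psl_inv g \<cdot>\<^sub>\<Gamma> \<alpha>) (Some 0) = Some 0" by (simp add: act_mult h)
  then obtain n where "psl_inv g \<cdot>\<^sub>\<Gamma> \<alpha> = lo n" using stab_0 by blast
  then have "\<alpha> = g \<cdot>\<^sub>\<Gamma> lo n" using mult_inv_cancel[of g \<alpha>] by simp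
  then show "\<alpha> \<in> lcoset g Gamma_0" by (auto simp: lcoset_def Gamma_0_eq)
qed


datatype line = Hor P1 | Ver P1 | Dia psl2

fun onL :: "line \<Rightarrow> P2 \<Rightarrow> bool" where
  "onL (Hor y) p = (snd p = y)"
| "onL (Ver x) p = (fst p = x)"
| "onL (Dia g) p = (snd p = act g (fst p))"

fun proj :: "line \<Rightarrow> P2 \<Rightarrow> P1" where
  "proj (Hor y) p = fst p"
| "proj (Ver x) p = snd p"
| "proj (Dia g) p = fst p"

fun emb :: "line \<Rightarrow> P1 \<Rightarrow> P2" where
  "emb (Hor y) z = (z,y)"
| "emb (Ver x) z = (x,z)"
| "emb (Dia g) z = (z, act g z)"

lemma onL_emb [simp]: "onL L (emb L z)" by (cases L) auto
lemma proj_emb [simp]: "proj L (emb L z) = z" by (cases L) auto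
lemma emb_proj: "onL L p \<Longrightarrow> emb L (proj L p) = p" by (cases L; cases p) auto

lemma line_unique:
  assumes "p \<noteq> q" "onL L p" "onL L q" "onL L' p" "onL L' q" shows "L = L'"
proof -
  obtain p1 p2 q1 q2 where pq: "p = (p1,p2)" "q = (q1,q2)" by (cases p; cases q) auto
  show ?thesis
  proof (cases L)
    case (Hor y) then show ?thesis using assms pq
      by (cases L') (auto simp: act_inj)
  next
    case (Ver x) then show ?thesis using assms pq
      by (cases L') auto
  next
    case (Dia g)
    show ?thesis
    proof (cases L')
      case (Dia h)
      have "p1 \<noteq> q1" using assms pq Dia \<open>L = Dia g\<close> by auto
      then have "g = h" using two_point[of g p1 h q1] assms pq Dia \<open>L = Dia g\<close> by auto
      then show ?thesis using Dia \<open>L = Dia g\<close> by simp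
    qed (use assms pq Dia in \<open>auto simp: act_inj\<close>)
  qed
qed

lemma zspan_neg: "x \<in> zspan A \<Longrightarrow> - x \<in> zspan A"
  using zspan_diff[OF zspan_zero] by fastforce
lemma zspan_add: "x \<in> zspan A \<Longrightarrow> y \<in> zspan A \<Longrightarrow> x + y \<in> zspan A"
  using zspan_diff[OF _ zspan_neg] by fastforce
lemma zspan_sum: "finite I \<Longrightarrow> (\<And>i. i \<in> I \<Longrightarrow> f i \<in> zspan A) \<Longrightarrow> sum f I \<in> zspan A"
  by (induction I rule: finite_induct) (auto intro: zspan_add zspan_zero)
lemma zspan_cmul: "x \<in> zspan A \<Longrightarrow> frag_cmul k x \<in> zspan A"
  by (rule frag_closure_minus_cmul) (auto intro: zspan_zero zspan_diff)
lemma zspan_frag_extend: "(\<And>k. k \<in> Poly_Mapping.keys c \<Longrightarrow> f k \<in> zspan A) \<Longrightarrow> frag_extend f c \<in> zspan A"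
  unfolding frag_extend_def by (auto intro!: zspan_sum zspan_cmul)

lemma frag_extend_fun_add: "frag_extend (\<lambda>k. f k + g k) c = frag_extend f c + frag_extend g c"
  by (simp add: frag_extend_def frag_cmul_distrib2 sum.distrib)
lemma frag_extend_fun_neg: "frag_extend (\<lambda>k. - f k) c = - frag_extend f c"
proof -
  have "frag_extend (\<lambda>k. - f k) c + frag_extend f c = frag_extend (\<lambda>k. - f k + f k) c"
    by (rule frag_extend_fun_add[symmetric])
  also have "\<dots> = 0" by (simp add: frag_extend_eq_0)
  finally have "frag_extend (\<lambda>k. - f k) c + frag_extend f c = 0" .
  then show ?thesis by (simp add: eq_neg_iff_add_eq_0)
qed
lemma frag_extend_fun_diff: "frag_extend (\<lambda>k. f k - g k) c = frag_extend f c - frag_extend g c"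
  using frag_extend_fun_add[of f "\<lambda>k. - g k" c] frag_extend_fun_neg[of g c] by simp
lemma frag_extend_fun_sum: "finite Y \<Longrightarrow> frag_extend (\<lambda>k. \<Sum>y\<in>Y. f y k) c = (\<Sum>y\<in>Y. frag_extend (f y) c)"
  by (induction Y rule: finite_induct) (simp_all add: frag_extend_fun_add frag_extend_def)
lemma frag_extend_comp: "frag_extend h (frag_extend g c) = frag_extend (\<lambda>k. frag_extend h (g k)) c"
  using subset_UNIV
  by (induction c rule: frag_induction) (auto simp: frag_extend_diff)

lemma frag_extend_split:
  assumes "finite Y" "\<phi> ` Poly_Mapping.keys c \<subseteq> Y"
  shows "frag_extend f c = (\<Sum>y\<in>Y. frag_extend (\<lambda>k. if \<phi> k = y then f k else 0) c)"
proof -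
  have "frag_extend f c = frag_extend (\<lambda>k. \<Sum>y\<in>Y. if \<phi> k = y then f k else 0) c"
  proof (rule frag_extend_eq)
    fix k assume "k \<in> Poly_Mapping.keys c"
    then have "\<phi> k \<in> Y" using assms(2) by auto
    then show "f k = (\<Sum>y\<in>Y. if \<phi> k = y then f k else 0)"
      using assms(1) by (simp add: sum.delta)
  qed
  then show ?thesis by (simp add: frag_extend_fun_sum[OF assms(1)])
qed

lemma phi_emb: "phi 0 g = emb (Ver (act g None))" "phi 1 g = emb (Dia g)" "phi 2 g = emb (Hor (act g (Some 0)))"
  by (auto simp: phi_def infty_def)

lemma push2_frag_of [simp]: "push2 f (frag_of (a,b)) = frag_of (f a, f b)"
  by (simp add: push2_def)
lemma push2_diff: "push2 f (a - b) = push2 f a - push2 f b" by (simp add: push2_def frag_extend_diff)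
lemma push2_add: "push2 f (a + b) = push2 f a + push2 f b" by (simp add: push2_def frag_extend_add)
lemma delta1_frag_of [simp]: "delta1 (frag_of (a,b)) = frag_of b - frag_of a"
  by (simp add: delta1_def)
lemma delta1_diff: "delta1 (a - b) = delta1 a - delta1 b" by (simp add: delta1_def frag_extend_diff)
lemma delta1_add: "delta1 (a + b) = delta1 a + delta1 b" by (simp add: delta1_def frag_extend_add)
lemma delta2_frag_of [simp]: "delta2 (frag_of (a,b,c)) = frag_of (b,c) - frag_of (a,c) + frag_of (a,b)"
  by (simp add: delta2_def)

lemma gen_mem: assumes "j \<in> {0,1,2}" "c \<in> cycles0" shows "push2 (phi j g) c \<in> Bsub"
  unfolding Bsub_def
  apply (rule zspan_gen)
  apply (rule UN_I[where a=j])
   apply (rule assms(1))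
  apply (rule UN_I[where a=g])
   apply simp
  apply (rule imageI)
  apply (rule assms(2))
  done

lemma Bsub_gen: assumes "delta1 c = 0" shows "push2 (emb L) c \<in> Bsub"
proof -
  have cy: "c \<in> cycles0" using assms by (simp add: cycles0_def)
  show ?thesis
  proof (cases L)
    case (Hor y)
    obtain g where "act g (Some 0) = y" using trans_0 by blast
    then have "emb L = phi 2 g" using Hor by (simp add: phi_emb)
    then show ?thesis using gen_mem[OF _ cy] by simp
  next
    case (Ver x)
    obtain g where "act g None = x" using trans_inf by blast
    then have "emb L = phi 0 g" using Ver by (simp add: phi_emb)
    then show ?thesis using gen_mem[OF _ cy] by simp
  next
    case (Dia g)
    then have "emb L = phi 1 g" using phi_emb(2)[of g] by metis
    then show ?thesis using gen_mem[OF _ cy] by simp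
  qed
qed

lemma Bsub_0: "0 \<in> Bsub" unfolding Bsub_def by (rule zspan_zero)
lemma Bsub_diff: "x \<in> Bsub \<Longrightarrow> y \<in> Bsub \<Longrightarrow> x - y \<in> Bsub" unfolding Bsub_def by (rule zspan_diff)
lemma Bsub_add: "x \<in> Bsub \<Longrightarrow> y \<in> Bsub \<Longrightarrow> x + y \<in> Bsub" unfolding Bsub_def by (rule zspan_add)
lemma Bsub_neg: "x \<in> Bsub \<Longrightarrow> - x \<in> Bsub" unfolding Bsub_def by (rule zspan_neg)
lemma Bsub_sum: "finite I \<Longrightarrow> (\<And>i. i \<in> I \<Longrightarrow> f i \<in> Bsub) \<Longrightarrow> sum f I \<in> Bsub"
  unfolding Bsub_def by (rule zspan_sum)
lemma Bsub_frag_extend: "(\<And>k. f k \<in> Bsub) \<Longrightarrow> frag_extend f c \<in> Bsub"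
  unfolding Bsub_def by (rule zspan_frag_extend)

lemma Bsub_tri: assumes "onL L p" "onL L q" "onL L r"
  shows "frag_of (p,q) + frag_of (q,r) - frag_of (p,r) \<in> Bsub"
proof -
  let ?c = "frag_of (proj L p, proj L q) + frag_of (proj L q, proj L r) - frag_of (proj L p, proj L r)"
  have "delta1 ?c = 0" by (simp add: delta1_add delta1_diff)
  then have "push2 (emb L) ?c \<in> Bsub" by (rule Bsub_gen)
  then show ?thesis using assms by (simp add: push2_add push2_diff emb_proj)
qed

lemma Bsub_rev: assumes "onL L p" "onL L q"
  shows "frag_of (p,q) + frag_of (q,p) \<in> Bsub"
proof -
  let ?c = "frag_of (proj L p, proj L q) + frag_of (proj L q, proj L p)"
  have "delta1 ?c = 0" by (simp add: delta1_add delta1_diff)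
  then have "push2 (emb L) ?c \<in> Bsub" by (rule Bsub_gen)
  then show ?thesis using assms by (simp add: push2_add push2_diff emb_proj)
qed

lemma Bsub_deg: "frag_of (p,p) \<in> Bsub"
proof -
  have "delta1 (frag_of (snd p, snd p) :: (P1 \<times> P1) \<Rightarrow>\<^sub>0 int) = 0" by simp
  then have "push2 (emb (Ver (fst p))) (frag_of (snd p, snd p)) \<in> Bsub" by (rule Bsub_gen)
  then show ?thesis by simp
qed

definition R :: "line \<Rightarrow> ((P2 \<times> P2) \<Rightarrow>\<^sub>0 int) \<Rightarrow> (P1 \<Rightarrow>\<^sub>0 int)" where
  "R L = frag_extend (\<lambda>(p,q). if onL L p \<and> onL L q then frag_of (proj L q) - frag_of (proj L p) else 0)"

lemma R_edge: assumes "onL L0 p" "onL L0 q"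
  shows "R L (frag_of (p,q)) = (if L = L0 then frag_of (proj L0 q) - frag_of (proj L0 p) else 0)"
proof (cases "p = q")
  case True then show ?thesis by (simp add: R_def)
next
  case False
  have e: "R L (frag_of (p,q)) = (if onL L p \<and> onL L q then frag_of (proj L q) - frag_of (proj L p) else 0)"
    by (simp add: R_def)
  show ?thesis
  proof (cases "L = L0")
    case True then show ?thesis using e assms by simp
  next
    case F: False
    have "\<not> (onL L p \<and> onL L q)" using line_unique[OF False _ _ assms, of L] F by blast
    then have "R L (frag_of (p,q)) = 0" using e by (simp only: if_False)
    then show ?thesis using F by simp
  qed
qed

lemma R_Bsub: assumes "c \<in> Bsub" shows "R L c = 0"
  using assms unfolding Bsub_def
proof (induction rule: zspan.induct)
  case zspan_zero then show ?case by (simp add: R_def)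
next
  case (zspan_diff x y) then show ?case by (simp add: R_def frag_extend_diff)
next
  case (zspan_gen a)
  then obtain j g c0 where j: "j \<in> {0,1,2::nat}" and a: "a = push2 (phi j g) c0" and c0: "delta1 c0 = 0"
    by (auto simp: cycles0_def)
  obtain L0 where e: "phi j g = emb L0" using j phi_emb by blast
  have "R L a = frag_extend (\<lambda>k. R L (case k of (z0,z1) \<Rightarrow> frag_of (emb L0 z0, emb L0 z1))) c0"
    by (simp add: a e push2_def R_def[of L] frag_extend_comp)
  also have "\<dots> = frag_extend (\<lambda>(z0,z1). if L = L0 then frag_of z1 - frag_of z0 else 0) c0"
    by (rule frag_extend_eq) (auto simp: R_edge[OF onL_emb onL_emb])
  also have "\<dots> = (if L = L0 then delta1 c0 else 0)"
    by (auto simp: delta1_def intro!: frag_extend_eq frag_extend_eq_0)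
  finally show ?case using c0 by simp
qed


abbreviation E :: "P2 \<Rightarrow> P2 \<Rightarrow> ((P2 \<times> P2) \<Rightarrow>\<^sub>0 int)" where "E p q \<equiv> frag_of (p,q)"

lemma actC_dT2: "actC (\<alpha>,\<beta>) dT2 =
   E (act \<alpha> (Some 0), act \<beta> None) (act \<alpha> (Some 0), act \<beta> (Some 0))
 - E (act \<alpha> None, act \<beta> None) (act \<alpha> (Some 0), act \<beta> (Some 0))
 + E (act \<alpha> None, act \<beta> None) (act \<alpha> (Some 0), act \<beta> None)"
  by (simp add: actC_def dT2_def push2_add push2_diff actP2_def infty_def)

lemma Theta2_of: "Theta2 (frag_of k) = actC k dT2" by (simp add: Theta2_def)

lemma act_Dia: "act (\<beta> \<cdot>\<^sub>\<Gamma> psl_inv \<alpha>) (act \<alpha> z) = act \<beta> z"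
  by (simp add: act_mult)

lemma R_lin: "R L (a - b + c) = R L a - R L b + R L c"
  by (simp add: R_def frag_extend_add frag_extend_diff)

lemma R_actC: "R L (actC (\<alpha>,\<beta>) dT2) =
   (if L = Ver (act \<alpha> (Some 0)) then frag_of (act \<beta> (Some 0)) - frag_of (act \<beta> None) else 0)
 - (if L = Dia (\<beta> \<cdot>\<^sub>\<Gamma> psl_inv \<alpha>) then frag_of (act \<alpha> (Some 0)) - frag_of (act \<alpha> None) else 0)
 + (if L = Hor (act \<beta> None) then frag_of (act \<alpha> (Some 0)) - frag_of (act \<alpha> None) else 0)"
proof -
  have v: "onL (Ver (act \<alpha> (Some 0))) (act \<alpha> (Some 0), act \<beta> None)"
          "onL (Ver (act \<alpha> (Some 0))) (act \<alpha> (Some 0), act \<beta> (Some 0))" by simp_all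
  have d: "onL (Dia (\<beta> \<cdot>\<^sub>\<Gamma> psl_inv \<alpha>)) (act \<alpha> None, act \<beta> None)"
          "onL (Dia (\<beta> \<cdot>\<^sub>\<Gamma> psl_inv \<alpha>)) (act \<alpha> (Some 0), act \<beta> (Some 0))" by (simp_all add: act_Dia)
  have h: "onL (Hor (act \<beta> None)) (act \<alpha> None, act \<beta> None)"
          "onL (Hor (act \<beta> None)) (act \<alpha> (Some 0), act \<beta> None)" by simp_all
  show ?thesis unfolding actC_dT2 R_lin
    by (simp add: R_edge[OF v] R_edge[OF d] R_edge[OF h])
qed

lemma R_Theta2: "R L (Theta2 x) = frag_extend (\<lambda>k. R L (actC k dT2)) x"
  by (simp add: Theta2_def R_def[of L] frag_extend_comp)

lemma Theta_Bsub_imp_J2: assumes "Theta2 x \<in> Bsub" shows "x \<in> J2"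
proof -
  have R0: "\<And>L. frag_extend (\<lambda>k. R L (actC k dT2)) x = 0"
    using R_Bsub[OF assms] R_Theta2 by metis
  have "x \<in> I_H"
    unfolding I_H_def
  proof (intro CollectI ballI)
    fix C assume "C \<in> {lcoset g Gamma_inf | g. True}"
    then obtain g where C: "C = lcoset g Gamma_inf" by blast
    have "frag_extend (\<lambda>k. R (Hor (act g None)) (actC k dT2)) x =
          frag_extend (\<lambda>k. - (case k of (\<alpha>,\<beta>) \<Rightarrow> if \<beta> \<in> C then bdG \<alpha> else 0)) x"
      by (rule frag_extend_eq) (auto simp: R_actC C lcoset_inf bdG_def infty_def)
    then show "frag_extend (\<lambda>(\<alpha>,\<beta>). if \<beta> \<in> C then bdG \<alpha> else 0) x = 0"
      using R0 by (simp add: frag_extend_fun_neg)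
  qed
  moreover have "x \<in> I_V"
    unfolding I_V_def
  proof (intro CollectI ballI)
    fix C assume "C \<in> {lcoset g Gamma_0 | g. True}"
    then obtain g where C: "C = lcoset g Gamma_0" by blast
    have "frag_extend (\<lambda>k. R (Ver (act g (Some 0))) (actC k dT2)) x =
          frag_extend (\<lambda>k. - (case k of (\<alpha>,\<beta>) \<Rightarrow> if \<alpha> \<in> C then bdG \<beta> else 0)) x"
      by (rule frag_extend_eq) (auto simp: R_actC C lcoset_0 bdG_def infty_def)
    then show "frag_extend (\<lambda>(\<alpha>,\<beta>). if \<alpha> \<in> C then bdG \<beta> else 0) x = 0"
      using R0 by (simp add: frag_extend_fun_neg)
  qed
  moreover have "x \<in> I_D"
    unfolding I_D_def
  proof (intro CollectI allI)
    fix g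
    have "frag_extend (\<lambda>k. R (Dia g) (actC k dT2)) x =
          frag_extend (\<lambda>k. (case k of (\<alpha>,\<beta>) \<Rightarrow> if \<beta> \<cdot>\<^sub>\<Gamma> psl_inv \<alpha> = g then bdG \<alpha> else 0)) x"
      by (rule frag_extend_eq) (auto simp: R_actC bdG_def infty_def)
    then show "frag_extend (\<lambda>(\<alpha>,\<beta>). if \<beta> \<cdot>\<^sub>\<Gamma> psl_inv \<alpha> = g then bdG \<alpha> else 0) x = 0"
      using R0 by simp
  qed
  ultimately show ?thesis by (simp add: J2_def)
qed

lemma part_Bsub:
  assumes f: "\<And>k. f k = push2 (emb (\<Lambda> (\<phi> k))) (frag_of (ea k, eb k))"
    and c: "\<And>m. frag_extend (\<lambda>k. if \<phi> k = m then frag_of (eb k) - frag_of (ea k) else 0) x = 0"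
  shows "frag_extend f x \<in> Bsub"
proof -
  have eq: "frag_extend f x = (\<Sum>y\<in>\<phi> ` Poly_Mapping.keys x. frag_extend (\<lambda>k. if \<phi> k = y then f k else 0) x)"
    by (rule frag_extend_split) auto
  have "frag_extend (\<lambda>k. if \<phi> k = y then f k else 0) x \<in> Bsub" for y
  proof -
    let ?c = "frag_extend (\<lambda>k. if \<phi> k = y then frag_of (ea k, eb k) else 0) x"
    have "delta1 ?c = frag_extend (\<lambda>k. delta1 (if \<phi> k = y then frag_of (ea k, eb k) else 0)) x"
      by (simp add: delta1_def frag_extend_comp)
    also have "\<dots> = frag_extend (\<lambda>k. if \<phi> k = y then frag_of (eb k) - frag_of (ea k) else 0) x"
      by (rule frag_extend_eq) (simp add: delta1_def)
    finally have "delta1 ?c = 0" using c by simp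
    then have "push2 (emb (\<Lambda> y)) ?c \<in> Bsub" by (rule Bsub_gen)
    moreover have "push2 (emb (\<Lambda> y)) ?c = frag_extend (\<lambda>k. if \<phi> k = y then f k else 0) x"
      by (simp add: push2_def[of "emb (\<Lambda> y)"] frag_extend_comp f) (rule frag_extend_eq, auto simp: push2_def f)
    ultimately show ?thesis by simp
  qed
  then show ?thesis unfolding eq by (intro Bsub_sum) auto
qed

lemma J2_imp_Theta_Bsub: assumes "x \<in> J2" shows "Theta2 x \<in> Bsub"
proof -
  have IH: "x \<in> I_H" and IV: "x \<in> I_V" and ID: "x \<in> I_D" using assms by (auto simp: J2_def)
  define V where "V = frag_extend (\<lambda>(\<alpha>,\<beta>). E (act \<alpha> (Some 0), act \<beta> None) (act \<alpha> (Some 0), act \<beta> (Some 0))) x"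
  define D where "D = frag_extend (\<lambda>(\<alpha>,\<beta>). E (act \<alpha> None, act \<beta> None) (act \<alpha> (Some 0), act \<beta> (Some 0))) x"
  define H where "H = frag_extend (\<lambda>(\<alpha>,\<beta>). E (act \<alpha> None, act \<beta> None) (act \<alpha> (Some 0), act \<beta> None)) x"
  have T: "Theta2 x = V - D + H"
  proof -
    have "Theta2 x = frag_extend (\<lambda>k. (case k of (\<alpha>,\<beta>) \<Rightarrow> E (act \<alpha> (Some 0), act \<beta> None) (act \<alpha> (Some 0), act \<beta> (Some 0)))
        - (case k of (\<alpha>,\<beta>) \<Rightarrow> E (act \<alpha> None, act \<beta> None) (act \<alpha> (Some 0), act \<beta> (Some 0)))
        + (case k of (\<alpha>,\<beta>) \<Rightarrow> E (act \<alpha> None, act \<beta> None) (act \<alpha> (Some 0), act \<beta> None))) x"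
      unfolding Theta2_def by (rule frag_extend_eq) (auto simp: actC_dT2)
    then show ?thesis by (simp add: V_def D_def H_def frag_extend_fun_add frag_extend_fun_diff)
  qed
  have "V \<in> Bsub" unfolding V_def
  proof (rule part_Bsub[where \<Lambda>=Ver and \<phi>="\<lambda>(\<alpha>,\<beta>). act \<alpha> (Some 0)"
        and ea="\<lambda>(\<alpha>,\<beta>). act \<beta> None" and eb="\<lambda>(\<alpha>,\<beta>). act \<beta> (Some 0)"])
    fix k show "(case k of (\<alpha>,\<beta>) \<Rightarrow> E (act \<alpha> (Some 0), act \<beta> None) (act \<alpha> (Some 0), act \<beta> (Some 0)))
      = push2 (emb (Ver ((\<lambda>(\<alpha>,\<beta>). act \<alpha> (Some 0)) k))) (frag_of ((\<lambda>(\<alpha>,\<beta>). act \<beta> None) k, (\<lambda>(\<alpha>,\<beta>). act \<beta> (Some 0)) k))"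
      by (cases k) simp
  next
    fix m
    obtain g where g: "act g (Some 0) = m" using trans_0 by blast
    have "frag_extend (\<lambda>(\<alpha>,\<beta>). if \<alpha> \<in> lcoset g Gamma_0 then bdG \<beta> else 0) x = 0"
      using IV by (auto simp: I_V_def)
    moreover have "frag_extend (\<lambda>k. if (\<lambda>(\<alpha>,\<beta>). act \<alpha> (Some 0)) k = m then frag_of ((\<lambda>(\<alpha>,\<beta>). act \<beta> (Some 0)) k) - frag_of ((\<lambda>(\<alpha>,\<beta>). act \<beta> None) k) else 0) x
        = frag_extend (\<lambda>k. - (case k of (\<alpha>,\<beta>) \<Rightarrow> if \<alpha> \<in> lcoset g Gamma_0 then bdG \<beta> else 0)) x"
      by (rule frag_extend_eq) (auto simp: lcoset_0 g bdG_def infty_def)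
    ultimately show "frag_extend (\<lambda>k. if (\<lambda>(\<alpha>,\<beta>). act \<alpha> (Some 0)) k = m then frag_of ((\<lambda>(\<alpha>,\<beta>). act \<beta> (Some 0)) k) - frag_of ((\<lambda>(\<alpha>,\<beta>). act \<beta> None) k) else 0) x = 0"
      by (simp add: frag_extend_fun_neg)
  qed
  moreover have "H \<in> Bsub" unfolding H_def
  proof (rule part_Bsub[where \<Lambda>=Hor and \<phi>="\<lambda>(\<alpha>,\<beta>). act \<beta> None"
        and ea="\<lambda>(\<alpha>,\<beta>). act \<alpha> None" and eb="\<lambda>(\<alpha>,\<beta>). act \<alpha> (Some 0)"])
    fix k show "(case k of (\<alpha>,\<beta>) \<Rightarrow> E (act \<alpha> None, act \<beta> None) (act \<alpha> (Some 0), act \<beta> None))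
      = push2 (emb (Hor ((\<lambda>(\<alpha>,\<beta>). act \<beta> None) k))) (frag_of ((\<lambda>(\<alpha>,\<beta>). act \<alpha> None) k, (\<lambda>(\<alpha>,\<beta>). act \<alpha> (Some 0)) k))"
      by (cases k) simp
  next
    fix m
    obtain g where g: "act g None = m" using trans_inf by blast
    have "frag_extend (\<lambda>(\<alpha>,\<beta>). if \<beta> \<in> lcoset g Gamma_inf then bdG \<alpha> else 0) x = 0"
      using IH by (auto simp: I_H_def)
    moreover have "frag_extend (\<lambda>k. if (\<lambda>(\<alpha>,\<beta>). act \<beta> None) k = m then frag_of ((\<lambda>(\<alpha>,\<beta>). act \<alpha> (Some 0)) k) - frag_of ((\<lambda>(\<alpha>,\<beta>). act \<alpha> None) k) else 0) x
        = frag_extend (\<lambda>k. - (case k of (\<alpha>,\<beta>) \<Rightarrow> if \<beta> \<in> lcoset g Gamma_inf then bdG \<alpha> else 0)) x"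
      by (rule frag_extend_eq) (auto simp: lcoset_inf g bdG_def infty_def)
    ultimately show "frag_extend (\<lambda>k. if (\<lambda>(\<alpha>,\<beta>). act \<beta> None) k = m then frag_of ((\<lambda>(\<alpha>,\<beta>). act \<alpha> (Some 0)) k) - frag_of ((\<lambda>(\<alpha>,\<beta>). act \<alpha> None) k) else 0) x = 0"
      by (simp add: frag_extend_fun_neg)
  qed
  moreover have "D \<in> Bsub" unfolding D_def
  proof (rule part_Bsub[where \<Lambda>=Dia and \<phi>="\<lambda>(\<alpha>,\<beta>). \<beta> \<cdot>\<^sub>\<Gamma> psl_inv \<alpha>"
        and ea="\<lambda>(\<alpha>,\<beta>). act \<alpha> None" and eb="\<lambda>(\<alpha>,\<beta>). act \<alpha> (Some 0)"])
    fix k show "(case k of (\<alpha>,\<beta>) \<Rightarrow> E (act \<alpha> None, act \<beta> None) (act \<alpha> (Some 0), act \<beta> (Some 0)))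
      = push2 (emb (Dia ((\<lambda>(\<alpha>,\<beta>). \<beta> \<cdot>\<^sub>\<Gamma> psl_inv \<alpha>) k))) (frag_of ((\<lambda>(\<alpha>,\<beta>). act \<alpha> None) k, (\<lambda>(\<alpha>,\<beta>). act \<alpha> (Some 0)) k))"
      by (cases k) (simp add: act_Dia)
  next
    fix m
    have "frag_extend (\<lambda>(\<alpha>,\<beta>). if \<beta> \<cdot>\<^sub>\<Gamma> psl_inv \<alpha> = m then bdG \<alpha> else 0) x = 0"
      using ID by (auto simp: I_D_def)
    moreover have "frag_extend (\<lambda>k. if (\<lambda>(\<alpha>,\<beta>). \<beta> \<cdot>\<^sub>\<Gamma> psl_inv \<alpha>) k = m then frag_of ((\<lambda>(\<alpha>,\<beta>). act \<alpha> (Some 0)) k) - frag_of ((\<lambda>(\<alpha>,\<beta>). act \<alpha> None) k) else 0) x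
        = frag_extend (\<lambda>k. - (case k of (\<alpha>,\<beta>) \<Rightarrow> if \<beta> \<cdot>\<^sub>\<Gamma> psl_inv \<alpha> = m then bdG \<alpha> else 0)) x"
      by (rule frag_extend_eq) (auto simp: bdG_def infty_def)
    ultimately show "frag_extend (\<lambda>k. if (\<lambda>(\<alpha>,\<beta>). \<beta> \<cdot>\<^sub>\<Gamma> psl_inv \<alpha>) k = m then frag_of ((\<lambda>(\<alpha>,\<beta>). act \<alpha> (Some 0)) k) - frag_of ((\<lambda>(\<alpha>,\<beta>). act \<alpha> None) k) else 0) x = 0"
      by (simp add: frag_extend_fun_neg)
  qed
  ultimately show ?thesis unfolding T by (intro Bsub_add Bsub_diff)
qed

lemma kernel: "Theta2 x \<in> Bsub \<longleftrightarrow> x \<in> J2"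
  using Theta_Bsub_imp_J2 J2_imp_Theta_Bsub by blast


definition Gt :: "P1 \<Rightarrow> P1 \<Rightarrow> P1 \<Rightarrow> P1 \<Rightarrow> ((P2 \<times> P2) \<Rightarrow>\<^sub>0 int)" where
  "Gt a b y y' = E (a,y') (b,y') - E (a,y) (b,y') + E (a,y) (a,y')"
definition Sq :: "P1 \<Rightarrow> P1 \<Rightarrow> P1 \<Rightarrow> P1 \<Rightarrow> ((P2 \<times> P2) \<Rightarrow>\<^sub>0 int)" where
  "Sq a b y y' = E (a,y) (b,y) + E (b,y) (b,y') - E (a,y') (b,y') - E (a,y) (a,y')"
definition inImg :: "((P2 \<times> P2) \<Rightarrow>\<^sub>0 int) \<Rightarrow> bool" where
  "inImg c \<longleftrightarrow> (\<exists>x. c - Theta2 x \<in> Bsub)"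

lemma Theta2_diff: "Theta2 (x - y) = Theta2 x - Theta2 y" by (simp add: Theta2_def frag_extend_diff)
lemma Theta2_0: "Theta2 0 = 0" by (simp add: Theta2_def)

lemma inImg_Bsub: "c \<in> Bsub \<Longrightarrow> inImg c"
  unfolding inImg_def by (rule exI[of _ 0]) (simp add: Theta2_0)

lemma inImg_diff: assumes "inImg c" "inImg d" shows "inImg (c - d)"
proof -
  obtain x y where "c - Theta2 x \<in> Bsub" "d - Theta2 y \<in> Bsub" using assms by (auto simp: inImg_def)
  then have "(c - Theta2 x) - (d - Theta2 y) \<in> Bsub" by (rule Bsub_diff)
  moreover have "(c - Theta2 x) - (d - Theta2 y) = (c - d) - Theta2 (x - y)" by (simp add: Theta2_diff)
  ultimately show ?thesis unfolding inImg_def by metis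
qed

lemma inImg_add: assumes "inImg c" "inImg d" shows "inImg (c + d)"
proof -
  have "inImg (0 - d)" using inImg_diff[OF inImg_Bsub[OF Bsub_0] assms(2)] .
  from inImg_diff[OF assms(1) this] show ?thesis by simp
qed

lemma inImg_equiv: assumes "inImg c" "d - c \<in> Bsub" shows "inImg d"
proof -
  have "inImg ((d - c) + c)" by (rule inImg_add[OF inImg_Bsub[OF assms(2)] assms(1)])
  then show ?thesis by simp
qed

lemma Theta2_pair: "Theta2 (frag_of (\<alpha>,\<beta>)) =
   E (act \<alpha> (Some 0), act \<beta> None) (act \<alpha> (Some 0), act \<beta> (Some 0))
 - E (act \<alpha> None, act \<beta> None) (act \<alpha> (Some 0), act \<beta> (Some 0))
 + E (act \<alpha> None, act \<beta> None) (act \<alpha> (Some 0), act \<beta> None)"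
  by (simp add: Theta2_of actC_dT2)

lemma adj_T: assumes "adj a b" "adj y y'"
  shows "inImg (E (b,y) (b,y') - E (a,y) (b,y') + E (a,y) (b,y))"
proof -
  obtain \<alpha> \<beta> where "act \<alpha> None = a" "act \<alpha> (Some 0) = b" "act \<beta> None = y" "act \<beta> (Some 0) = y'"
    using assms by (auto simp: adj_def)
  then have "E (b,y) (b,y') - E (a,y) (b,y') + E (a,y) (b,y) - Theta2 (frag_of (\<alpha>,\<beta>)) = 0"
    by (simp add: Theta2_pair)
  then show ?thesis unfolding inImg_def using Bsub_0 by metis
qed

lemma adj_Gt: assumes "adj a b" "adj y y'" shows "inImg (Gt a b y y')"
proof -
  obtain \<alpha> \<beta> where ab: "act \<alpha> None = a" "act \<alpha> (Some 0) = b" "act \<beta> None = y" "act \<beta> (Some 0) = y'"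
    using assms by (auto simp: adj_def)
  define h where "h = \<beta> \<cdot>\<^sub>\<Gamma> psl_inv \<alpha>"
  have h: "act h a = y" "act h b = y'" using ab by (auto simp: h_def act_Dia)
  have Th: "Theta2 (frag_of (\<alpha> \<cdot>\<^sub>\<Gamma> S_mat, \<beta> \<cdot>\<^sub>\<Gamma> S_mat)) = E (a,y') (a,y) - E (b,y') (a,y) + E (b,y') (a,y')"
    by (simp add: Theta2_pair act_mult ab)
  have b1: "E (a,y') (b,y') + E (b,y') (a,y') \<in> Bsub" by (rule Bsub_rev[of "Hor y'"]) simp_all
  have b2: "E (a,y) (b,y') + E (b,y') (a,y) \<in> Bsub" by (rule Bsub_rev[of "Dia h"]) (simp_all add: h)
  have b3: "E (a,y) (a,y') + E (a,y') (a,y) \<in> Bsub" by (rule Bsub_rev[of "Ver a"]) simp_all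
  have "Gt a b y y' - Theta2 (0 - frag_of (\<alpha> \<cdot>\<^sub>\<Gamma> S_mat, \<beta> \<cdot>\<^sub>\<Gamma> S_mat))
     = (E (a,y') (b,y') + E (b,y') (a,y')) - (E (a,y) (b,y') + E (b,y') (a,y)) + (E (a,y) (a,y') + E (a,y') (a,y))"
  proof -
    have "Theta2 (0 - frag_of (\<alpha> \<cdot>\<^sub>\<Gamma> S_mat, \<beta> \<cdot>\<^sub>\<Gamma> S_mat)) = 0 - Theta2 (frag_of (\<alpha> \<cdot>\<^sub>\<Gamma> S_mat, \<beta> \<cdot>\<^sub>\<Gamma> S_mat))"
      by (simp only: Theta2_diff Theta2_0)
    then show ?thesis by (simp add: Th Gt_def algebra_simps)
  qed
  moreover have "\<dots> \<in> Bsub" by (rule Bsub_add[OF Bsub_diff[OF b1 b2] b3])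
  ultimately show ?thesis unfolding inImg_def by metis
qed

lemma adj_Sq: assumes "adj a b" "adj y y'" shows "inImg (Sq a b y y')"
proof -
  have "Sq a b y y' = (E (b,y) (b,y') - E (a,y) (b,y') + E (a,y) (b,y)) - Gt a b y y'"
    by (simp add: Sq_def Gt_def algebra_simps)
  then show ?thesis using inImg_diff[OF adj_T[OF assms] adj_Gt[OF assms]] by simp
qed

lemma Sq_add1: "Sq a c y y' - (Sq a b y y' + Sq b c y y') \<in> Bsub"
proof -
  have t1: "E (a,y) (b,y) + E (b,y) (c,y) - E (a,y) (c,y) \<in> Bsub" by (rule Bsub_tri[of "Hor y"]) simp_all
  have t2: "E (a,y') (b,y') + E (b,y') (c,y') - E (a,y') (c,y') \<in> Bsub" by (rule Bsub_tri[of "Hor y'"]) simp_all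
  have "Sq a c y y' - (Sq a b y y' + Sq b c y y') = (E (a,y') (b,y') + E (b,y') (c,y') - E (a,y') (c,y')) - (E (a,y) (b,y) + E (b,y) (c,y) - E (a,y) (c,y))"
    by (simp add: Sq_def algebra_simps)
  then show ?thesis using Bsub_diff[OF t2 t1] by simp
qed

lemma Sq_add2: "Sq a b y y'' - (Sq a b y y' + Sq a b y' y'') \<in> Bsub"
proof -
  have t1: "E (a,y) (a,y') + E (a,y') (a,y'') - E (a,y) (a,y'') \<in> Bsub" by (rule Bsub_tri[of "Ver a"]) simp_all
  have t2: "E (b,y) (b,y') + E (b,y') (b,y'') - E (b,y) (b,y'') \<in> Bsub" by (rule Bsub_tri[of "Ver b"]) simp_all
  have "Sq a b y y'' - (Sq a b y y' + Sq a b y' y'') = (E (a,y) (a,y') + E (a,y') (a,y'') - E (a,y) (a,y'')) - (E (b,y) (b,y') + E (b,y') (b,y'') - E (b,y) (b,y''))"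
    by (simp add: Sq_def algebra_simps)
  then show ?thesis using Bsub_diff[OF t1 t2] by simp
qed

lemma Sq_deg1: "Sq a a y y' \<in> Bsub"
proof -
  have "Sq a a y y' = E (a,y) (a,y) - E (a,y') (a,y')" by (simp add: Sq_def)
  then show ?thesis using Bsub_diff[OF Bsub_deg Bsub_deg] by simp
qed

lemma Sq_deg2: "Sq a b y y \<in> Bsub"
proof -
  have "Sq a b y y = E (b,y) (b,y) - E (a,y) (a,y)" by (simp add: Sq_def)
  then show ?thesis using Bsub_diff[OF Bsub_deg Bsub_deg] by simp
qed

lemma Sq_adj_chain: assumes "adj a b" shows "inImg (Sq a b y y')"
proof -
  have "adj\<^sup>*\<^sup>* y y'" by (rule adjs_all)
  then show ?thesis
  proof (induction rule: rtranclp_induct)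
    case base then show ?case by (rule inImg_Bsub[OF Sq_deg2])
  next
    case (step y' y'')
    have "inImg (Sq a b y y' + Sq a b y' y'')"
      by (rule inImg_add[OF step.IH adj_Sq[OF assms step.hyps(2)]])
    then show ?case using inImg_equiv Sq_add2 by blast
  qed
qed

lemma Sq_all: "inImg (Sq a b y y')"
proof -
  have "adj\<^sup>*\<^sup>* a b" by (rule adjs_all)
  then show ?thesis
  proof (induction rule: rtranclp_induct)
    case base then show ?case by (rule inImg_Bsub[OF Sq_deg1])
  next
    case (step b c)
    have "inImg (Sq a b y y' + Sq b c y y')"
      by (rule inImg_add[OF step.IH Sq_adj_chain[OF step.hyps(2)]])
    then show ?case using inImg_equiv Sq_add1 by blast
  qed
qed

lemma Gt_F2: "Gt a c (act g a) (act g c) - (Gt a b (act g a) (act g b) + Gt b c (act g b) (act g c) - Sq a b (act g b) (act g c)) \<in> Bsub"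
proof -
  let ?A = "act g a" and ?B = "act g b" and ?C = "act g c"
  have td: "E (a,?A) (b,?B) + E (b,?B) (c,?C) - E (a,?A) (c,?C) \<in> Bsub" by (rule Bsub_tri[of "Dia g"]) simp_all
  have tv: "E (a,?A) (a,?B) + E (a,?B) (a,?C) - E (a,?A) (a,?C) \<in> Bsub" by (rule Bsub_tri[of "Ver a"]) simp_all
  have th: "E (a,?C) (b,?C) + E (b,?C) (c,?C) - E (a,?C) (c,?C) \<in> Bsub" by (rule Bsub_tri[of "Hor ?C"]) simp_all
  have "Gt a c ?A ?C - (Gt a b ?A ?B + Gt b c ?B ?C - Sq a b ?B ?C)
     = (E (a,?A) (b,?B) + E (b,?B) (c,?C) - E (a,?A) (c,?C))
     - (E (a,?A) (a,?B) + E (a,?B) (a,?C) - E (a,?A) (a,?C))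
     - (E (a,?C) (b,?C) + E (b,?C) (c,?C) - E (a,?C) (c,?C))"
    by (simp add: Gt_def Sq_def algebra_simps)
  then show ?thesis using Bsub_diff[OF Bsub_diff[OF td tv] th] by simp
qed

lemma Gt_all: "inImg (Gt a c (act g a) (act g c))"
proof -
  have "adj\<^sup>*\<^sup>* a c" by (rule adjs_all)
  then show ?thesis
  proof (induction rule: rtranclp_induct)
    case base
    have "Gt a a (act g a) (act g a) = E (a, act g a) (a, act g a)" by (simp add: Gt_def)
    then show ?case using inImg_Bsub[OF Bsub_deg] by simp
  next
    case (step b c)
    have "inImg (Gt a b (act g a) (act g b) + Gt b c (act g b) (act g c) - Sq a b (act g b) (act g c))"
      by (intro inImg_diff inImg_add step.IH Sq_all adj_Gt step.hyps(2) adj_act)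
    then show ?case using inImg_equiv Gt_F2 by blast
  qed
qed


lemma H1cls_eq: "H1cls c = H1cls d \<longleftrightarrow> c - d \<in> Bsub"
proof
  assume h: "H1cls c = H1cls d"
  have "c \<in> H1cls c" unfolding H1cls_def using Bsub_0 by force
  then have "c \<in> H1cls d" using h by simp
  then obtain b where "c = d + b" "b \<in> Bsub" by (auto simp: H1cls_def)
  then show "c - d \<in> Bsub" by simp
next
  assume h: "c - d \<in> Bsub"
  show "H1cls c = H1cls d"
  proof (rule set_eqI)
    fix z
    show "z \<in> H1cls c \<longleftrightarrow> z \<in> H1cls d"
    proof
      assume "z \<in> H1cls c"
      then obtain b where "z = c + b" "b \<in> Bsub" by (auto simp: H1cls_def)
      then have "z = d + ((c - d) + b)" "(c - d) + b \<in> Bsub" using h Bsub_add by auto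
      then show "z \<in> H1cls d" unfolding H1cls_def by blast
    next
      assume "z \<in> H1cls d"
      then obtain b where "z = d + b" "b \<in> Bsub" by (auto simp: H1cls_def)
      then have "z = c + (b - (c - d))" "b - (c - d) \<in> Bsub" using h Bsub_diff by auto
      then show "z \<in> H1cls c" unfolding H1cls_def by blast
    qed
  qed
qed

definition Gen :: "psl2 \<times> psl2 \<Rightarrow> ((P2 \<times> P2) \<Rightarrow>\<^sub>0 int)" where
  "Gen k = (case k of (\<alpha>,\<beta>) \<Rightarrow> delta2 (frag_of ((act \<alpha> (Some 0), act \<beta> (Some 0)), (act \<alpha> (Some 0), act \<beta> None), (act \<alpha> None, act \<beta> None))))"

lemma Gen_in: "Gen k \<in> H1gens"
proof -
  obtain \<alpha> \<beta> where k: "k = (\<alpha>,\<beta>)" by (cases k) auto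
  let ?g = "\<beta> \<cdot>\<^sub>\<Gamma> psl_inv \<alpha>"
  have "Gen k = delta2 (frag_of ((act \<alpha> (Some 0), act ?g (act \<alpha> (Some 0))), (act \<alpha> (Some 0), act ?g (act \<alpha> None)), (act \<alpha> None, act ?g (act \<alpha> None))))"
    by (simp add: Gen_def k act_Dia)
  then show ?thesis unfolding H1gens_def by blast
qed

lemma Theta_Gen: "actC k dT2 + Gen k \<in> Bsub"
proof -
  obtain \<alpha> \<beta> where k: "k = (\<alpha>,\<beta>)" by (cases k) auto
  let ?P0 = "(act \<alpha> None, act \<beta> None)" and ?P1 = "(act \<alpha> (Some 0), act \<beta> None)"
    and ?P2 = "(act \<alpha> (Some 0), act \<beta> (Some 0))"
  have b1: "E ?P1 ?P2 + E ?P2 ?P1 \<in> Bsub" by (rule Bsub_rev[of "Ver (act \<alpha> (Some 0))"]) simp_all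
  have b2: "E ?P0 ?P2 + E ?P2 ?P0 \<in> Bsub" by (rule Bsub_rev[of "Dia (\<beta> \<cdot>\<^sub>\<Gamma> psl_inv \<alpha>)"]) (simp_all add: act_Dia)
  have b3: "E ?P0 ?P1 + E ?P1 ?P0 \<in> Bsub" by (rule Bsub_rev[of "Hor (act \<beta> None)"]) simp_all
  have "actC k dT2 + Gen k = (E ?P1 ?P2 + E ?P2 ?P1) - (E ?P0 ?P2 + E ?P2 ?P0) + (E ?P0 ?P1 + E ?P1 ?P0)"
    by (simp add: k actC_dT2 Gen_def algebra_simps)
  then show ?thesis using Bsub_add[OF Bsub_diff[OF b1 b2] b3] by simp
qed

lemma gens_inImg: "c \<in> zspan H1gens \<Longrightarrow> inImg c"
proof (induction rule: zspan.induct)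
  case zspan_zero then show ?case by (rule inImg_Bsub[OF Bsub_0])
next
  case (zspan_gen a)
  then obtain a0 b0 g where "a = delta2 (frag_of ((a0, act g a0), (a0, act g b0), (b0, act g b0)))"
    by (auto simp: H1gens_def)
  then have "a = Gt a0 b0 (act g a0) (act g b0)" by (simp add: Gt_def)
  then show ?case using Gt_all by simp
next
  case (zspan_diff x y) then show ?case by (blast intro: inImg_diff)
qed

theorem mainTheorem13:
  shows "{x. H1cls (Theta2 x) = H1cls 0} = J2
         \<and> range (\<lambda>x. H1cls (Theta2 x)) = H1cls ` zspan H1gens"
proof
  show "{x. H1cls (Theta2 x) = H1cls 0} = J2"
    by (auto simp: H1cls_eq kernel)
next
  show "range (\<lambda>x. H1cls (Theta2 x)) = H1cls ` zspan H1gens"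
  proof (rule set_eqI, rule iffI)
    fix z assume "z \<in> range (\<lambda>x. H1cls (Theta2 x))"
    then obtain x where z: "z = H1cls (Theta2 x)" by blast
    let ?c = "frag_extend (\<lambda>k. - Gen k) x"
    have c: "?c \<in> zspan H1gens"
      by (rule zspan_frag_extend) (intro zspan_neg zspan_gen Gen_in)
    have "Theta2 x - ?c = frag_extend (\<lambda>k. actC k dT2 + Gen k) x"
      by (simp add: Theta2_def frag_extend_fun_add frag_extend_fun_neg)
    also have "\<dots> \<in> Bsub" by (rule Bsub_frag_extend[OF Theta_Gen])
    finally have "H1cls (Theta2 x) = H1cls ?c" by (simp add: H1cls_eq)
    then show "z \<in> H1cls ` zspan H1gens" using z c by blast
  next
    fix z assume "z \<in> H1cls ` zspan H1gens"
    then obtain c where z: "z = H1cls c" and c: "c \<in> zspan H1gens" by blast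
    obtain x where "c - Theta2 x \<in> Bsub" using gens_inImg[OF c] by (auto simp: inImg_def)
    then have "H1cls c = H1cls (Theta2 x)" by (simp add: H1cls_eq)
    then show "z \<in> range (\<lambda>x. H1cls (Theta2 x))" using z by auto
  qed
qed


end
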